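(* Let $q$ be a prime power, $k,b,t$ positive integers, and $f:\mathbb{F}_q^k\to \mathrm{Im}(f)$ an arbitrary function. Let $\boldsymbol{x}_1,\ldots,\boldsymbol{x}_{q^k}$ be an enumeration of all vectors of $\mathbb{F}_q^k$. Then \[ N_b\big(\boldsymbol{B}_f^{(1)}(t)\big)\le r_b^f(k,t)\le N_b\big(\boldsymbol{B}_f^{(2)}(t)\big). \]
   Context: For a vector $\boldsymbol{z}=(z_0,\ldots,z_{n-1})\in\mathbb{F}_q^n$, its $b$-symbol read vector is $\pi_b(\boldsymbol{z})=[(z_0,\ldots,z_{b-1}),(z_1,\ldots,z_b),\ldots,(z_{n-1},z_0,\ldots,z_{b-2})]$ (indices modulo $n$), and the $b$-symbol distance of $\boldsymbol{z},\boldsymbol{w}\in\mathbb{F}_q^n$ is $d_b(\boldsymbol{z},\boldsymbol{w})=d_H(\pi_b(\boldsymbol{z}),\pi_b(\boldsymbol{w}))$, i.e. the number of $i\in\{0,\ldots,n-1\}$ with $(z_i,\ldots,z_{i+b-1})\neq(w_i,\ldots,w_{i+b-1})$. A systematic encoding $\mathrm{Enc}:\mathbb{F}_q^k\to\mathbb{F}_q^{k+r}$, $\mathrm{Enc}(\boldsymbol{x})=(\boldsymbol{x},p(\boldsymbol{x}))$ with $p(\boldsymbol{x})\in\mathbb{F}_q^r$, is a function-correcting $b$-symbol code for $f$ (correcting $t$ errors) if $d_b(\mathrm{Enc}(\boldsymbol{x}_1),\mathrm{Enc}(\boldsymbol{x}_2))\ge 2t+1$ for all $\boldsymbol{x}_1,\boldsymbol{x}_2\in\mathbb{F}_q^k$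 with $f(\boldsymbol{x}_1)\ne f(\boldsymbol{x}_2)$. The optimal redundancy $r_b^f(k,t)$ is the smallest $r$ for which such a code exists. For $M\times M$ matrix $\boldsymbol{B}$ with nonnegative integer entries, a $\boldsymbol{B}$-irregular $b$-symbol distance code is a set $\{\boldsymbol{p}_1,\ldots,\boldsymbol{p}_M\}\subseteq \mathbb{F}_q^r$ admitting an ordering with $d_b(\boldsymbol{p}_i,\boldsymbol{p}_j)\ge[\boldsymbol{B}]_{ij}$ for all $i,j$; $N_b(\boldsymbol{B})$ is the smallest length $r$ for which such a code exists. With $[x]^+=\max\{x,0\}$, for vectors $\boldsymbol{x}_1,\ldots,\boldsymbol{x}_M\in\mathbb{F}_q^k$ define $M\times M$ matrices $[\boldsymbol{B}_f^{(1)}(t,\boldsymbol{x}_1,\ldots,\boldsymbol{x}_M)]_{ij}=[2t-b+2-d_b(\boldsymbol{x}_i,\boldsymbol{x}_j)]^+$ if $f(\boldsymbol{x}_i)\ne f(\boldsymbol{x}_j)$ and $0$ otherwise, and $[\boldsymbol{B}_f^{(2)}(t,\boldsymbol{x}_1,\ldots,\boldsymbol{x}_M)]_{ij}=[2t+b-d_b(\boldsymbol{x}_i,\boldsymbol{x}_j)]^+$ if $f(\boldsymbol{x}_i)\ne f(\boldsymbol{x}_j)$ and $0$ otherwise. $\boldsymbol{B}_f^{(1)}(t)$ and $\boldsymbol{B}_f^{(2)}(t)$ denote these matrices for $M=q^k$ and $\boldsymbol{x}_1,\ldots,\boldsymbol{x}_{q^k}$ the enumeration of $\mathbb{F}_q^k$.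 *)

theory Defs
  imports Main
begin

text \<open>Vectors of F_q^n are lists of length n over a finite field type 'a (q = CARD('a)).\<close>

definition vecs :: "'a itself \<Rightarrow> nat \<Rightarrow> 'a list set" where
  "vecs _ n = {x. length x = n}"

definition bsym_dist :: "nat \<Rightarrow> 'a list \<Rightarrow> 'a list \<Rightarrow> nat" where
  "bsym_dist b z w = card {i. i < length z \<and>
      (\<exists>j<b. z ! ((i + j) mod length z) \<noteq> w ! ((i + j) mod length z))}"

text \<open>Function-correcting b-symbol code with redundancy r (systematic encoding x |-> x @ p x).\<close>
definition is_fc_bsym_code :: "nat \<Rightarrow> nat \<Rightarrow> nat \<Rightarrow> ('a list \<Rightarrow> 'c) \<Rightarrow> nat \<Rightarrow> ('a list \<Rightarrow> 'a list) \<Rightarrow> bool" where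
  "is_fc_bsym_code b k t f r p \<longleftrightarrow>
     (\<forall>x. length x = k \<longrightarrow> length (p x) = r) \<and>
     (\<forall>x1 x2. length x1 = k \<longrightarrow> length x2 = k \<longrightarrow> f x1 \<noteq> f x2 \<longrightarrow>
        2 * t + 1 \<le> bsym_dist b (x1 @ p x1) (x2 @ p x2))"

definition opt_red :: "'a itself \<Rightarrow> nat \<Rightarrow> nat \<Rightarrow> nat \<Rightarrow> ('a list \<Rightarrow> 'c) \<Rightarrow> nat" where
  "opt_red _ b k t f = (LEAST r. \<exists>p :: 'a list \<Rightarrow> 'a list. is_fc_bsym_code b k t f r p)"

definition is_irreg_code :: "nat \<Rightarrow> nat \<Rightarrow> (nat \<Rightarrow> nat \<Rightarrow> nat) \<Rightarrow> nat \<Rightarrow> (nat \<Rightarrow> 'a list) \<Rightarrow> bool" where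
  "is_irreg_code b M B r P \<longleftrightarrow>
     (\<forall>i<M. length (P i) = r) \<and> (\<forall>i<M. \<forall>j<M. B i j \<le> bsym_dist b (P i) (P j))"

definition N_b :: "'a itself \<Rightarrow> nat \<Rightarrow> nat \<Rightarrow> (nat \<Rightarrow> nat \<Rightarrow> nat) \<Rightarrow> nat" where
  "N_b _ b M B = (LEAST r. \<exists>P :: nat \<Rightarrow> 'a list. is_irreg_code b M B r P)"

text \<open>The matrices B_f^(1)(t) and B_f^(2)(t) w.r.t. an enumeration xs of F_q^k
  (natural-number subtraction is [.]^+).\<close>
definition B1 :: "nat \<Rightarrow> nat \<Rightarrow> ('a list \<Rightarrow> 'c) \<Rightarrow> (nat \<Rightarrow> 'a list) \<Rightarrow> nat \<Rightarrow> nat \<Rightarrow> nat" where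
  "B1 b t f xs i j = (if f (xs i) \<noteq> f (xs j)
      then (2 * t + 2) - b - bsym_dist b (xs i) (xs j) else 0)"

definition B2 :: "nat \<Rightarrow> nat \<Rightarrow> ('a list \<Rightarrow> 'c) \<Rightarrow> (nat \<Rightarrow> 'a list) \<Rightarrow> nat \<Rightarrow> nat \<Rightarrow> nat" where
  "B2 b t f xs i j = (if f (xs i) \<noteq> f (xs j)
      then (2 * t + b) - bsym_dist b (xs i) (xs j) else 0)"

end

theory Submission
  imports Defs
begin

definition DD :: "'a list \<Rightarrow> 'a list \<Rightarrow> nat \<Rightarrow> bool" where
  "DD z w j = (z ! (j mod length z) \<noteq> w ! (j mod length z))"

lemma bsym_alt: "bsym_dist b z w = card {i. i < length z \<and> (\<exists>j<b. DD z w (i+j))}"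
  unfolding bsym_dist_def DD_def by simp

lemma ex_split: "(c::nat) \<le> b \<Longrightarrow> (\<exists>j<b. Q j) = ((\<exists>j<c. Q j) \<or> (\<exists>u<b-c. Q (c+u)))"
proof
  assume cb: "c \<le> b" and "\<exists>j<b. Q j"
  then obtain j where j: "j<b" "Q j" by blast
  show "(\<exists>j<c. Q j) \<or> (\<exists>u<b-c. Q (c+u))"
  proof (cases "j < c")
    case True then show ?thesis using j by blast
  next
    case False
    then have "c \<le> j" by simp
    then have "j - c < b - c" by (rule diff_less_mono[OF j(1)])
    moreover have "Q (c + (j-c))" using j False by simp
    ultimately show ?thesis by blast
  qed
next
  assume "c \<le> b" "(\<exists>j<c. Q j) \<or> (\<exists>u<b-c. Q (c+u))"
  then show "\<exists>j<b. Q j"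
    by (metis add.commute less_diff_conv order_less_le_trans)
qed

lemma mod_le_sub: "(n::nat) \<le> x \<Longrightarrow> x mod n \<le> x - n"
  by (metis le_add_diff_inverse2 mod_add_self2 mod_less_eq_dividend)

lemma contra1:
  fixes Dz Dx Dp :: "nat \<Rightarrow> bool"
  assumes Lx: "\<And>t. t<k \<Longrightarrow> Dz t = Dx t" and Lp: "\<And>t. t<r \<Longrightarrow> Dz (k+t) = Dp t"
    and Mz: "\<And>j. Dz j = Dz (j mod (k+r))" and k: "0<k" and r: "0<r"
    and a1: "\<exists>u<A. Dz(k+u)" and a2: "\<forall>u<A. \<not>Dx u" and a3: "\<exists>u<A'. Dz u" and a4: "\<forall>u<A'. \<not> Dp u"
  shows False
proof -
  have key: "\<not> Dz pos" if "pos < k+r" "(pos < k \<longrightarrow> pos < A) \<and> (k \<le> pos \<longrightarrow> pos - k < A')" for pos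
  proof (cases "pos < k")
    case True
    then show ?thesis using Lx a2 that by auto
  next
    case False
    then have "Dz pos = Dp (pos - k)" using Lp[of "pos-k"] that by simp
    then show ?thesis using a4 that False by auto
  qed
  show False
  proof (cases "A \<le> A'")
    case True
    obtain u where u: "u<A" "Dz(k+u)" using a1 by auto
    define pos where "pos = (k+u) mod (k+r)"
    have pl: "pos < k+r" using k pos_def by simp
    have "pos < k \<longrightarrow> pos \<le> u"
    proof
      assume "pos < k"
      have "\<not> (k+u < k+r)"
      proof
        assume "k+u < k+r"
        then have "pos = k+u" unfolding pos_def by simp
        with \<open>pos < k\<close> show False by simp
      qed
      then have "k + r \<le> k + u" by simp
      then show "pos \<le> u" unfolding pos_def using mod_le_sub[of "k+r" "k+u"] by simp
    qed
    moreover have "pos \<le> k + u" unfolding pos_def by simp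
    ultimately have "\<not> Dz pos" using key[OF pl] u True by fastforce
    then show False using Mz[of "k+u"] u pos_def by simp
  next
    case False
    obtain u where u: "u<A'" "Dz u" using a3 by auto
    define pos where "pos = u mod (k+r)"
    have pl: "pos < k+r" using k pos_def by simp
    have "pos \<le> u" unfolding pos_def by simp
    then have "\<not> Dz pos" using key[OF pl] u False by fastforce
    then show False using Mz[of "u"] u pos_def by simp
  qed
qed

lemma contra2:
  fixes Dz Dx Dp :: "nat \<Rightarrow> bool"
  assumes Lx: "\<And>t. t<k \<Longrightarrow> Dz t = Dx t" and Lp: "\<And>t. t<r \<Longrightarrow> Dz (k+t) = Dp t"
    and Mx: "\<And>j. Dx j = Dx (j mod k)" and Mp: "\<And>j. Dp j = Dp (j mod r)" and k: "0<k" and r: "0<r"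
    and a1: "\<exists>u<A. Dx u" and a2: "\<forall>u<A. \<not>Dz(k+u)" and a3: "\<exists>u<A'. Dp u" and a4: "\<forall>u<A'. \<not> Dz u"
  shows False
proof (cases "A \<le> A'")
  case True
  obtain u where u: "u<A" "Dx u" using a1 by auto
  have "u mod k < k" "u mod k \<le> u" using k by auto
  then have "u mod k < A'" using u True by linarith
  then have "\<not> Dz (u mod k)" using a4 by blast
  then show False using Lx[of "u mod k"] Mx[of u] u \<open>u mod k < k\<close> by simp
next
  case False
  obtain u where u: "u<A'" "Dp u" using a3 by auto
  have "u mod r < r" "u mod r \<le> u" using r by auto
  then have "u mod r < A" using u False by linarith
  then have "\<not> Dz (k + u mod r)" using a2 by blast
  then show False using Lp[of "u mod r"] Mp[of u] u \<open>u mod r < r\<close> by simp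
qed

lemma core:
  fixes x x' p p' :: "'a list"
  assumes lx: "length x = k" and lx': "length x' = k" and lp: "length p = r" and lp': "length p' = r"
    and k: "0<k" and r: "0<r"
  shows "bsym_dist b (x@p) (x'@p') \<le> bsym_dist b x x' + bsym_dist b p p' + (b-1)
    \<and> bsym_dist b x x' + bsym_dist b p p' \<le> bsym_dist b (x@p) (x'@p') + (b-1)"
proof -
  define z where "z = x@p"
  define w where "w = x'@p'"
  define n where "n = k+r"
  define Dz where "Dz = DD z w"
  define Dx where "Dx = DD x x'"
  define Dp where "Dp = DD p p'"
  have lz: "length z = n" "length w = n" using lx lx' lp lp' z_def w_def n_def by auto
  have Mz: "Dz j = Dz (j mod n)" for j unfolding Dz_def DD_def lz by simp
  have Mx: "Dx j = Dx (j mod k)" for j unfolding Dx_def DD_def lx by simp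
  have Mp: "Dp j = Dp (j mod r)" for j unfolding Dp_def DD_def lp by simp
  have Lx: "Dz t = Dx t" if "t<k" for t
  proof -
    have "t < n" using that n_def by simp
    then show ?thesis using that unfolding Dz_def Dx_def DD_def lz lx z_def w_def
      by (simp add: nth_append lx lx')
  qed
  have Lp: "Dz (k+t) = Dp t" if "t<r" for t
  proof -
    have "k+t < n" using that n_def by simp
    then have "(k+t) mod n = k+t" by simp
    then have "Dz (k+t) = (z ! (k+t) \<noteq> w ! (k+t))" unfolding Dz_def DD_def lz by simp
    then show ?thesis using that unfolding Dp_def DD_def lp z_def w_def
      by (simp add: nth_append lx lx')
  qed
  define W where "W D i = (\<exists>j<b. D (i+j))" for D :: "nat \<Rightarrow> bool" and i
  define Sz where "Sz = {i. i<n \<and> W Dz i}"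
  define Sx where "Sx = {i. i<k \<and> W Dx i}"
  define Sp where "Sp = {i. i<r \<and> W Dp i}"
  define Sp' where "Sp' = (\<lambda>i. k+i) ` Sp"
  have dz: "bsym_dist b (x@p) (x'@p') = card Sz"
    unfolding bsym_alt Sz_def W_def Dz_def z_def[symmetric] w_def[symmetric] lz ..
  have dx: "bsym_dist b x x' = card Sx"
    unfolding bsym_alt Sx_def W_def Dx_def lx ..
  have dp: "bsym_dist b p p' = card Sp"
    unfolding bsym_alt Sp_def W_def Dp_def lp ..
  have cSp': "card Sp' = card Sp" unfolding Sp'_def by (simp add: card_image)
  have fin: "finite A" if "A \<subseteq> {..<n}" for A using that finite_subset by blast
  have Sx_sub: "Sx \<subseteq> {..<n}" unfolding Sx_def n_def by auto
  have Sp'_sub: "Sp' \<subseteq> {..<n}" unfolding Sp'_def Sp_def n_def by auto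
  have Sz_sub: "Sz \<subseteq> {..<n}" unfolding Sz_def by auto
  define C1 where "C1 = {i. i<k \<and> k < i+b}"
  define C2 where "C2 = {i. k\<le>i \<and> i<n \<and> n < i+b}"
  have cC1: "card C1 \<le> b-1"
  proof -
    have "C1 \<subseteq> {k+1-b..<k}" unfolding C1_def by auto
    then have "card C1 \<le> card {k+1-b..<k}" by (intro card_mono) auto
    then show ?thesis by simp
  qed
  have cC2: "card C2 \<le> b-1"
  proof -
    have "C2 \<subseteq> {n+1-b..<n}" unfolding C2_def by auto
    then have "card C2 \<le> card {n+1-b..<n}" by (intro card_mono) auto
    then show ?thesis by simp
  qed
  have C1_sub: "C1 \<subseteq> {..<n}" unfolding C1_def n_def by auto
  have C2_sub: "C2 \<subseteq> {..<n}" unfolding C2_def by auto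
  have pure1: "W Dz i = W Dx i" if "i+b \<le> k" for i
    unfolding W_def using Lx that by (metis add_less_cancel_left order_less_le_trans)
  have pure2: "W Dz i = W Dp (i-k)" if "k \<le> i" "i+b \<le> n" for i
  proof -
    have "Dz (i+j) = Dp (i-k+j)" if "j<b" for j
    proof -
      have e: "i+j = k + (i-k+j)" using \<open>k \<le> i\<close> by simp
      moreover have "i-k+j < r" using \<open>j<b\<close> \<open>i+b \<le> n\<close> \<open>k \<le> i\<close> n_def by linarith
      then have "Dz (k + (i-k+j)) = Dp (i-k+j)" using Lp by blast
      then show ?thesis using e by metis
    qed
    then show ?thesis unfolding W_def by auto
  qed
  have c1z: "W Dz i = ((\<exists>j<k-i. Dx(i+j)) \<or> (\<exists>u<i+b-k. Dz(k+u)))" if "i \<in> C1" for i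
  proof -
    have ib: "k - i \<le> b" "b - (k-i) = i+b-k" using that C1_def by auto
    have "W Dz i = ((\<exists>j<k-i. Dz(i+j)) \<or> (\<exists>u<b-(k-i). Dz(i+(k-i+u))))"
      unfolding W_def by (rule ex_split[OF ib(1)])
    also have "\<dots> = ((\<exists>j<k-i. Dx(i+j)) \<or> (\<exists>u<i+b-k. Dz(k+u)))"
    proof -
      have "(\<exists>j<k-i. Dz(i+j)) = (\<exists>j<k-i. Dx(i+j))" using Lx by auto
      moreover have "i+(k-i+u) = k+u" for u using that C1_def by auto
      ultimately show ?thesis using ib by simp
    qed
    finally show ?thesis .
  qed
  have c1x: "W Dx i = ((\<exists>j<k-i. Dx(i+j)) \<or> (\<exists>u<i+b-k. Dx u))" if "i \<in> C1" for i
  proof -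
    have ib: "k - i \<le> b" "b - (k-i) = i+b-k" using that C1_def by auto
    have "W Dx i = ((\<exists>j<k-i. Dx(i+j)) \<or> (\<exists>u<b-(k-i). Dx(i+(k-i+u))))"
      unfolding W_def by (rule ex_split[OF ib(1)])
    also have "\<dots> = ((\<exists>j<k-i. Dx(i+j)) \<or> (\<exists>u<i+b-k. Dx u))"
    proof -
      have "Dx(i+(k-i+u)) = Dx u" for u
      proof -
        have "i+(k-i+u) = k+u" using that C1_def by auto
        then show ?thesis using Mx[of "k+u"] Mx[of u] by simp
      qed
      then show ?thesis using ib by simp
    qed
    finally show ?thesis .
  qed
  have c2z: "W Dz i = ((\<exists>j<n-i. Dp(i-k+j)) \<or> (\<exists>u<i+b-n. Dz u))" if "i \<in> C2" for i
  proof -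
    have ib: "n - i \<le> b" "b - (n-i) = i+b-n" using that C2_def by auto
    have "W Dz i = ((\<exists>j<n-i. Dz(i+j)) \<or> (\<exists>u<b-(n-i). Dz(i+(n-i+u))))"
      unfolding W_def by (rule ex_split[OF ib(1)])
    also have "\<dots> = ((\<exists>j<n-i. Dp(i-k+j)) \<or> (\<exists>u<i+b-n. Dz u))"
    proof -
      have "Dz(i+j) = Dp(i-k+j)" if "j<n-i" for j
      proof -
        have e: "i+j = k + (i-k+j)" and "i-k+j < r" using \<open>i \<in> C2\<close> that C2_def n_def by auto
        then have "Dz (k + (i-k+j)) = Dp (i-k+j)" using Lp by blast
        then show ?thesis using e by metis
      qed
      then have "(\<exists>j<n-i. Dz(i+j)) = (\<exists>j<n-i. Dp(i-k+j))" by auto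
      moreover have "Dz(i+(n-i+u)) = Dz u" for u
      proof -
        have "i+(n-i+u) = n+u" using that C2_def by auto
        then show ?thesis using Mz[of "n+u"] Mz[of u] by simp
      qed
      ultimately show ?thesis using ib by simp
    qed
    finally show ?thesis .
  qed
  have c2p: "W Dp (i-k) = ((\<exists>j<n-i. Dp(i-k+j)) \<or> (\<exists>u<i+b-n. Dp u))" if "i \<in> C2" for i
  proof -
    have ib: "n - i \<le> b" "b - (n-i) = i+b-n" using that C2_def by auto
    have "W Dp (i-k) = ((\<exists>j<n-i. Dp(i-k+j)) \<or> (\<exists>u<b-(n-i). Dp(i-k+(n-i+u))))"
      unfolding W_def by (rule ex_split[OF ib(1)])
    also have "\<dots> = ((\<exists>j<n-i. Dp(i-k+j)) \<or> (\<exists>u<i+b-n. Dp u))"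
    proof -
      have "Dp(i-k+(n-i+u)) = Dp u" for u
      proof -
        have e: "i-k+(n-i+u) = r+u" using that C2_def n_def by auto
        have "Dp (r+u) = Dp u" using Mp[of "r+u"] Mp[of u] by simp
        then show ?thesis using e by metis
      qed
      then show ?thesis using ib by simp
    qed
    finally show ?thesis .
  qed
  define R1 where "R1 = {i\<in>C1. \<not> W Dx i \<and> W Dz i}"
  define R2 where "R2 = {i\<in>C2. \<not> W Dp (i-k) \<and> W Dz i}"
  have R12: "R1 = {} \<or> R2 = {}"
  proof (rule ccontr)
    assume "\<not> (R1 = {} \<or> R2 = {})"
    then obtain i i' where i: "i \<in> R1" and i': "i' \<in> R2" by blast
    have iC: "i \<in> C1" and i'C: "i' \<in> C2" using i i' R1_def R2_def by auto
    have h1: "\<exists>u<i+b-k. Dz(k+u)" and h2: "\<forall>u<i+b-k. \<not> Dx u"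
      using i c1z[OF iC] c1x[OF iC] R1_def by auto
    have h3: "\<exists>u<i'+b-n. Dz u" and h4: "\<forall>u<i'+b-n. \<not> Dp u"
      using i' c2z[OF i'C] c2p[OF i'C] R2_def by auto
    show False using contra1[of k Dz Dx r Dp, OF Lx Lp _ k r h1 h2 h3 h4] Mz n_def by blast
  qed
  have cR: "card (R1 \<union> R2) \<le> b-1"
  proof (cases "R1 = {}")
    case True
    have "card R2 \<le> card C2" using C2_sub R2_def fin by (intro card_mono) auto
    then show ?thesis using True cC2 by simp
  next
    case False
    then have "R2 = {}" using R12 by simp
    have "card R1 \<le> card C1" using C1_sub R1_def fin by (intro card_mono) auto
    then show ?thesis using \<open>R2 = {}\<close> cC1 by simp
  qed
  have incl1: "Sz \<subseteq> Sx \<union> Sp' \<union> (R1 \<union> R2)"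
  proof
    fix i assume "i \<in> Sz"
    then have i: "i < n" "W Dz i" using Sz_def by auto
    show "i \<in> Sx \<union> Sp' \<union> (R1 \<union> R2)"
    proof (cases "i < k")
      case True
      show ?thesis
      proof (cases "i \<in> C1")
        case True
        then show ?thesis using i \<open>i<k\<close> Sx_def R1_def by auto
      next
        case False
        then have "i + b \<le> k" using \<open>i<k\<close> C1_def by auto
        then show ?thesis using pure1 i \<open>i<k\<close> Sx_def by auto
      qed
    next
      case False
      have iSp': "i \<in> Sp'" if "W Dp (i-k)"
      proof -
        have "i - k \<in> Sp" using that i False Sp_def n_def by auto
        then show ?thesis unfolding Sp'_def using False by (intro image_eqI[of _ _ "i-k"]) auto
      qed
      show ?thesis
      proof (cases "i \<in> C2")
        case True
        then show ?thesis using i iSp' R2_def by auto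
      next
        case c2: False
        then have "i + b \<le> n" using False i C2_def by auto
        then show ?thesis using pure2 i False iSp' by auto
      qed
    qed
  qed
  have ineq1: "card Sz \<le> card Sx + card Sp' + (b-1)"
  proof -
    have "card Sz \<le> card (Sx \<union> Sp' \<union> (R1 \<union> R2))"
    proof -
      have "Sx \<union> Sp' \<union> (R1 \<union> R2) \<subseteq> {..<n}"
        using Sx_sub Sp'_sub C1_sub C2_sub unfolding R1_def R2_def by blast
      then show ?thesis using card_mono[OF fin incl1] by blast
    qed
    also have "\<dots> \<le> card (Sx \<union> Sp') + card (R1 \<union> R2)" by (rule card_Un_le)
    also have "\<dots> \<le> card Sx + card Sp' + card (R1 \<union> R2)" using card_Un_le by simp
    finally show ?thesis using cR by simp
  qed
  define Q1 where "Q1 = {i\<in>C1. W Dx i \<and> \<not> W Dz i}"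
  define Q2 where "Q2 = {i\<in>C2. W Dp (i-k) \<and> \<not> W Dz i}"
  have Q12: "Q1 = {} \<or> Q2 = {}"
  proof (rule ccontr)
    assume "\<not> (Q1 = {} \<or> Q2 = {})"
    then obtain i i' where i: "i \<in> Q1" and i': "i' \<in> Q2" by blast
    have iC: "i \<in> C1" and i'C: "i' \<in> C2" using i i' Q1_def Q2_def by auto
    have h1: "\<exists>u<i+b-k. Dx u" and h2: "\<forall>u<i+b-k. \<not> Dz(k+u)"
      using i c1z[OF iC] c1x[OF iC] Q1_def by auto
    have h3: "\<exists>u<i'+b-n. Dp u" and h4: "\<forall>u<i'+b-n. \<not> Dz u"
      using i' c2z[OF i'C] c2p[OF i'C] Q2_def by auto
    show False using contra2[of k Dz Dx r Dp, OF Lx Lp Mx Mp k r h1 h2 h3 h4] by blast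
  qed
  have cQ: "card (Q1 \<union> Q2) \<le> b-1"
  proof (cases "Q1 = {}")
    case True
    have "card Q2 \<le> card C2" using C2_sub Q2_def fin by (intro card_mono) auto
    then show ?thesis using True cC2 by simp
  next
    case False
    then have "Q2 = {}" using Q12 by simp
    have "card Q1 \<le> card C1" using C1_sub Q1_def fin by (intro card_mono) auto
    then show ?thesis using \<open>Q2 = {}\<close> cC1 by simp
  qed
  have incl2: "Sx \<union> Sp' \<subseteq> Sz \<union> (Q1 \<union> Q2)"
  proof
    fix i assume "i \<in> Sx \<union> Sp'"
    then consider (a) "i \<in> Sx" | (b) "i \<in> Sp'" by blast
    then show "i \<in> Sz \<union> (Q1 \<union> Q2)"
    proof cases
      case a
      then have i: "i < k" "W Dx i" using Sx_def by auto
      have "i < n" using i n_def by simp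
      show ?thesis
      proof (cases "i \<in> C1")
        case True
        then show ?thesis using i \<open>i<n\<close> Sz_def Q1_def by auto
      next
        case False
        then have "i + b \<le> k" using \<open>i<k\<close> C1_def by auto
        then show ?thesis using pure1 i \<open>i<n\<close> Sz_def by auto
      qed
    next
      case b
      then obtain i0 where i0: "i = k + i0" "i0 < r" "W Dp i0" using Sp'_def Sp_def by auto
      have i: "k \<le> i" "i < n" "W Dp (i-k)" using i0 n_def by auto
      show ?thesis
      proof (cases "i \<in> C2")
        case True
        then show ?thesis using i Sz_def Q2_def by auto
      next
        case False
        then have "i + b \<le> n" using i C2_def by auto
        then show ?thesis using pure2 i Sz_def by auto
      qed
    qed
  qed
  have ineq2: "card Sx + card Sp' \<le> card Sz + (b-1)"
  proof -
    have disj: "Sx \<inter> Sp' = {}" unfolding Sx_def Sp'_def by auto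
    have "card Sx + card Sp' = card (Sx \<union> Sp')"
      using disj Sx_sub Sp'_sub fin by (intro card_Un_disjoint[symmetric]) auto
    also have "\<dots> \<le> card (Sz \<union> (Q1 \<union> Q2))"
    proof -
      have "Sz \<union> (Q1 \<union> Q2) \<subseteq> {..<n}"
        using Sz_sub C1_sub C2_sub unfolding Q1_def Q2_def by blast
      then show ?thesis using card_mono[OF fin incl2] by blast
    qed
    also have "\<dots> \<le> card Sz + card (Q1 \<union> Q2)" by (rule card_Un_le)
    finally show ?thesis using cQ by simp
  qed
  show ?thesis using ineq1 ineq2 dz dx dp cSp' by simp
qed

lemma bsym_nil: "bsym_dist b [] [] = 0" unfolding bsym_dist_def by simp

lemma core0:
  fixes x x' p p' :: "'a list"
  assumes lx: "length x = k" and lx': "length x' = k" and lp: "length p = r" and lp': "length p' = r"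
    and k: "0<k"
  shows "bsym_dist b (x@p) (x'@p') \<le> bsym_dist b x x' + bsym_dist b p p' + (b-1)
    \<and> bsym_dist b x x' + bsym_dist b p p' \<le> bsym_dist b (x@p) (x'@p') + (b-1)"
proof (cases "r = 0")
  case True
  then have "p = []" "p' = []" using lp lp' by auto
  then show ?thesis by (simp add: bsym_nil)
next
  case False
  then show ?thesis using core[OF assms] by simp
qed

lemma rep_code:
  fixes u v :: "'a list"
  assumes lu: "length u = k" and lv: "length v = k" and uv: "u \<noteq> v" and b: "0 < b" and k: "0<k"
  shows "m \<le> bsym_dist b (map (\<lambda>c. u ! (c mod k)) [0..<m*k]) (map (\<lambda>c. v ! (c mod k)) [0..<m*k])"
proof -
  obtain d where d: "d < k" "u ! d \<noteq> v ! d" using lu lv uv nth_equalityI by metis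
  define U where "U = map (\<lambda>c. u ! (c mod k)) [0..<m*k]"
  define V where "V = map (\<lambda>c. v ! (c mod k)) [0..<m*k]"
  have lU: "length U = m*k" unfolding U_def by simp
  have sub: "(\<lambda>c. c*k+d) ` {..<m} \<subseteq> {i. i < length U \<and> (\<exists>j<b. U ! ((i + j) mod length U) \<noteq> V ! ((i + j) mod length U))}"
  proof
    fix y assume "y \<in> (\<lambda>c. c*k+d) ` {..<m}"
    then obtain c where c: "c < m" "y = c*k+d" by auto
    have "c*k + d < (c+1)*k" using d by simp
    also have "\<dots> \<le> m*k" using c by (intro mult_right_mono) auto
    finally have yl: "y < m*k" using c by simp
    have "(c*k+d) mod k = d" using d by simp
    then have "U ! y \<noteq> V ! y" using yl c d unfolding U_def V_def by simp
    then show "y \<in> {i. i < length U \<and> (\<exists>j<b. U ! ((i + j) mod length U) \<noteq> V ! ((i + j) mod length U))}"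
      using yl lU b by (intro CollectI conjI exI[of _ 0]) auto
  qed
  have inj: "inj_on (\<lambda>c. c*k+d) {..<m}" using k by (intro inj_onI) simp
  have "m = card ((\<lambda>c. c*k+d) ` {..<m})" using card_image[OF inj] by simp
  also have "\<dots> \<le> card {i. i < length U \<and> (\<exists>j<b. U ! ((i + j) mod length U) \<noteq> V ! ((i + j) mod length U))}"
    by (rule card_mono[OF _ sub]) simp
  finally show ?thesis unfolding bsym_dist_def U_def V_def by simp
qed

theorem theorem3p2:
  fixes f :: "'a::{field,finite} list \<Rightarrow> 'c"
    and xs :: "nat \<Rightarrow> 'a list"
    and k b t :: nat
  assumes "0 < k" and "0 < b" and "0 < t"
    and "bij_betw xs {..<card (UNIV :: 'a set) ^ k} (vecs TYPE('a) k)"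
  shows "N_b TYPE('a) b (card (UNIV :: 'a set) ^ k) (B1 b t f xs) \<le> opt_red TYPE('a) b k t f
       \<and> opt_red TYPE('a) b k t f \<le> N_b TYPE('a) b (card (UNIV :: 'a set) ^ k) (B2 b t f xs)"
proof -
  define M where "M = card (UNIV :: 'a set) ^ k"
  have bij: "bij_betw xs {..<M} {x. length x = k}" using assms(4) unfolding M_def vecs_def .
  have xl: "length (xs i) = k" if "i < M" for i using bij_betw_apply[OF bij] that by auto
  define ix where "ix v = inv_into {..<M} xs v" for v
  have ixM: "ix v < M" and xix: "xs (ix v) = v" if "length v = k" for v
  proof -
    have vi: "v \<in> xs ` {..<M}" using bij that unfolding bij_betw_def by auto
    show "ix v < M" unfolding ix_def using inv_into_into[OF vi] by simp
    show "xs (ix v) = v" unfolding ix_def using f_inv_into_f[OF vi] by simp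
  qed
  define m where "m = 2*t+b"
  define P0 where "P0 i = map (\<lambda>c. xs i ! (c mod k)) [0..<m*k]" for i
  have ex2: "\<exists>P :: nat \<Rightarrow> 'a list. is_irreg_code b M (B2 b t f xs) (m*k) P"
  proof (intro exI[of _ P0])
    show "is_irreg_code b M (B2 b t f xs) (m*k) P0"
      unfolding is_irreg_code_def
    proof (intro conjI allI impI)
      fix i assume "i < M" then show "length (P0 i) = m*k" unfolding P0_def by simp
    next
      fix i j assume ij: "i < M" "j < M"
      show "B2 b t f xs i j \<le> bsym_dist b (P0 i) (P0 j)"
      proof (cases "f (xs i) \<noteq> f (xs j)")
        case True
        then have "xs i \<noteq> xs j" by auto
        then have "m \<le> bsym_dist b (P0 i) (P0 j)" unfolding P0_def
          using rep_code[OF xl[OF ij(1)] xl[OF ij(2)] _ assms(2) assms(1)] by blast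
        then show ?thesis unfolding B2_def m_def using True by simp
      next
        case False then show ?thesis unfolding B2_def by simp
      qed
    qed
  qed
  define N2 where "N2 = N_b TYPE('a) b M (B2 b t f xs)"
  obtain P2 :: "nat \<Rightarrow> 'a list" where P2: "is_irreg_code b M (B2 b t f xs) N2 P2"
  proof -
    have "\<exists>r. \<exists>P :: nat \<Rightarrow> 'a list. is_irreg_code b M (B2 b t f xs) r P" using ex2 by blast
    from LeastI_ex[OF this] show ?thesis using that unfolding N2_def N_b_def by blast
  qed
  define p2 where "p2 v = P2 (ix v)" for v
  have fc2: "is_fc_bsym_code b k t f N2 p2"
    unfolding is_fc_bsym_code_def
  proof (intro conjI allI impI)
    fix x :: "'a list" assume "length x = k"
    then show "length (p2 x) = N2" using P2 ixM unfolding p2_def is_irreg_code_def by blast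
  next
    fix x1 x2 :: "'a list" assume h: "length x1 = k" "length x2 = k" "f x1 \<noteq> f x2"
    define i where "i = ix x1"
    define j where "j = ix x2"
    have ij: "i < M" "j < M" "xs i = x1" "xs j = x2" using ixM xix h i_def j_def by auto
    have lp: "length (p2 x1) = N2" "length (p2 x2) = N2"
      using P2 ixM h unfolding p2_def is_irreg_code_def by auto
    have "B2 b t f xs i j \<le> bsym_dist b (P2 i) (P2 j)" using P2 ij unfolding is_irreg_code_def by blast
    then have "(2*t+b) - bsym_dist b x1 x2 \<le> bsym_dist b (p2 x1) (p2 x2)"
      unfolding B2_def p2_def using ij h i_def j_def by simp
    moreover have "bsym_dist b x1 x2 + bsym_dist b (p2 x1) (p2 x2) \<le> bsym_dist b (x1 @ p2 x1) (x2 @ p2 x2) + (b-1)"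
      using core0[OF h(1) h(2) lp assms(1)] by blast
    ultimately show "2 * t + 1 \<le> bsym_dist b (x1 @ p2 x1) (x2 @ p2 x2)" using assms(2) by linarith
  qed
  have up: "opt_red TYPE('a) b k t f \<le> N2"
    unfolding opt_red_def by (rule Least_le) (use fc2 in blast)
  have ex1: "\<exists>r. \<exists>p :: 'a list \<Rightarrow> 'a list. is_fc_bsym_code b k t f r p" using fc2 by blast
  define R where "R = opt_red TYPE('a) b k t f"
  obtain p1 :: "'a list \<Rightarrow> 'a list" where p1: "is_fc_bsym_code b k t f R p1"
    using LeastI_ex[OF ex1] unfolding R_def opt_red_def by blast
  define P1 where "P1 i = p1 (xs i)" for i
  have ic1: "is_irreg_code b M (B1 b t f xs) R P1"
    unfolding is_irreg_code_def
  proof (intro conjI allI impI)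
    fix i assume "i < M" then show "length (P1 i) = R"
      using p1 xl unfolding P1_def is_fc_bsym_code_def by blast
  next
    fix i j assume ij: "i < M" "j < M"
    show "B1 b t f xs i j \<le> bsym_dist b (P1 i) (P1 j)"
    proof (cases "f (xs i) \<noteq> f (xs j)")
      case True
      have lp: "length (P1 i) = R" "length (P1 j) = R"
        using p1 xl ij unfolding P1_def is_fc_bsym_code_def by auto
      have "2*t+1 \<le> bsym_dist b (xs i @ P1 i) (xs j @ P1 j)"
        using p1 xl ij True unfolding P1_def is_fc_bsym_code_def by blast
      moreover have "bsym_dist b (xs i @ P1 i) (xs j @ P1 j) \<le> bsym_dist b (xs i) (xs j) + bsym_dist b (P1 i) (P1 j) + (b-1)"
        using core0[OF xl[OF ij(1)] xl[OF ij(2)] lp assms(1)] by blast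
      ultimately show ?thesis unfolding B1_def using True assms(2) by simp
    next
      case False then show ?thesis unfolding B1_def by simp
    qed
  qed
  have low: "N_b TYPE('a) b M (B1 b t f xs) \<le> R"
    unfolding N_b_def by (rule Least_le) (use ic1 in blast)
  show ?thesis using low up unfolding M_def[symmetric] N2_def R_def by simp
qed

end
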